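(* Let $\varphi(x)$, $x\in\mathbb{C}^n$, be given in conjunctive normal form $$\varphi(x)=\bigwedge_{i=1}^{d}\Big(\bigvee_{j=1}^{e_i} t_{ij}(x)=0\;\vee\;\bigvee_{k=1}^{f_i} u_{ik}(x)\neq 0\Big),$$ with $t_{ij},u_{ik}\in\mathbb{C}[x_1,\dots,x_n]$, having $d\ge1$ conjuncts and at most $f$ inequations per conjunct ($f_i\le f$). Then there is a polynomial $q(a,b,x)\in\mathbb{C}[a,b,x]$ of degree at most $2d-1$ in $a$ and at most $f+1$ in $b$ such that for all $x\in\mathbb{C}^n$, $$\varphi(x)\iff(\forall a\in\mathbb{C})(\exists b\in\mathbb{C})\;q(a,b,x)=0.$$ Explicitly, one may take $$q(a,b,x)=\Big[1-b\prod_{i=1}^d(a-i)\Big]\Big[\sum_{i=1}^d\prod_{h\neq i}(a-h)\prod_{j=1}^{e_i}t_{ij}(x)\prod_{k=1}^{f_i}\big(1-b\,u_{ik}(x)\big)\Big],$$ where $h$ ranges over $\{1,\dots,d\}\setminus\{i\}$.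
   Context: Empty products are $1$; $a,b$ are single scalar variables. *)

theory Defs
  imports "HOL-Analysis.Analysis"
begin

text \<open>Over the complex numbers these are exactly
  the functions induced by elements of C[x_1,...,x_n].\<close>
inductive cpoly_fun :: "(complex^'n \<Rightarrow> complex) \<Rightarrow> bool" where
  const: "cpoly_fun (\<lambda>x. c)"
| var: "cpoly_fun (\<lambda>x. x $ i)"
| add: "cpoly_fun p \<Longrightarrow> cpoly_fun q \<Longrightarrow> cpoly_fun (\<lambda>x. p x + q x)"
| mult: "cpoly_fun p \<Longrightarrow> cpoly_fun q \<Longrightarrow> cpoly_fun (\<lambda>x. p x * q x)"

definition cnf_eval ::
  "nat \<Rightarrow> (nat \<Rightarrow> nat) \<Rightarrow> (nat \<Rightarrow> nat) \<Rightarrow> (nat \<Rightarrow> nat \<Rightarrow> complex^'n \<Rightarrow> complex)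
   \<Rightarrow> (nat \<Rightarrow> nat \<Rightarrow> complex^'n \<Rightarrow> complex) \<Rightarrow> complex^'n \<Rightarrow> bool" where
  "cnf_eval d e fi t u x \<longleftrightarrow>
     (\<forall>i\<in>{1..d}. (\<exists>j\<in>{1..e i}. t i j x = 0) \<or> (\<exists>k\<in>{1..fi i}. u i k x \<noteq> 0))"

definition q_explicit ::
  "nat \<Rightarrow> (nat \<Rightarrow> nat) \<Rightarrow> (nat \<Rightarrow> nat) \<Rightarrow> (nat \<Rightarrow> nat \<Rightarrow> complex^'n \<Rightarrow> complex)
   \<Rightarrow> (nat \<Rightarrow> nat \<Rightarrow> complex^'n \<Rightarrow> complex) \<Rightarrow> complex \<Rightarrow> complex \<Rightarrow> complex^'n \<Rightarrow> complex" where
  "q_explicit d e fi t u a b x =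
     (1 - b * (\<Prod>i=1..d. a - of_nat i)) *
     (\<Sum>i=1..d. (\<Prod>h\<in>{1..d} - {i}. a - of_nat h) * (\<Prod>j=1..e i. t i j x)
                 * (\<Prod>k=1..fi i. 1 - b * u i k x))"

end

theory Submission
  imports Defs
begin

definition bipoly :: "(complex \<Rightarrow> complex \<Rightarrow> complex^'n \<Rightarrow> complex) \<Rightarrow> nat \<Rightarrow> nat \<Rightarrow> bool" where
  "bipoly g N M \<longleftrightarrow> (\<exists>c :: nat \<Rightarrow> nat \<Rightarrow> complex^'n \<Rightarrow> complex.
     (\<forall>p r. cpoly_fun (c p r)) \<and>
     (\<forall>a b x. g a b x = (\<Sum>p\<le>N. \<Sum>r\<le>M. c p r x * a ^ p * b ^ r)))"

lemma cp_prod: "finite A \<Longrightarrow> (\<forall>i\<in>A. cpoly_fun (f i)) \<Longrightarrow> cpoly_fun (\<lambda>x. \<Prod>i\<in>A. f i x)"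
  by (induction rule: finite_induct) (auto intro: cpoly_fun.intros)

lemma bipoly_mono:
  assumes "bipoly g N M" "N \<le> N'" "M \<le> M'" shows "bipoly g N' M'"
proof -
  obtain c where c: "\<forall>p r. cpoly_fun (c p r)"
    "\<forall>a b x. g a b x = (\<Sum>p\<le>N. \<Sum>r\<le>M. c p r x * a^p * b^r)"
    using assms(1) unfolding bipoly_def by blast
  define c' where "c' p r = (if p \<le> N \<and> r \<le> M then c p r else (\<lambda>x. 0))" for p r
  have "cpoly_fun (c' p r)" for p r using c(1) by (auto simp: c'_def intro: cpoly_fun.const)
  moreover have "g a b x = (\<Sum>p\<le>N'. \<Sum>r\<le>M'. c' p r x * a^p * b^r)" for a b x
  proof -
    have "(\<Sum>p\<le>N'. \<Sum>r\<le>M'. c' p r x * a^p * b^r) = (\<Sum>p\<le>N. \<Sum>r\<le>M'. c' p r x * a^p * b^r)"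
      by (rule sum.mono_neutral_right) (use assms in \<open>auto simp: c'_def\<close>)
    also have "\<dots> = (\<Sum>p\<le>N. \<Sum>r\<le>M. c' p r x * a^p * b^r)"
      by (rule sum.cong[OF refl], rule sum.mono_neutral_right) (use assms in \<open>auto simp: c'_def\<close>)
    also have "\<dots> = (\<Sum>p\<le>N. \<Sum>r\<le>M. c p r x * a^p * b^r)" by (simp add: c'_def)
    finally show ?thesis using c(2) by simp
  qed
  ultimately show ?thesis unfolding bipoly_def by blast
qed

lemma bipoly_cong:
  assumes "bipoly g N M" "\<And>a b x. g a b x = h a b x" shows "bipoly h N M"
proof -
  have "g = h" using assms(2) by (intro ext) simp
  then show ?thesis using assms(1) by simp
qed

lemma bipoly_const: "cpoly_fun k \<Longrightarrow> bipoly (\<lambda>a b x. k x) 0 0"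
  unfolding bipoly_def by (rule exI[of _ "\<lambda>p r. k"]) simp

lemma bipoly_add:
  assumes "bipoly g N M" "bipoly h N M" shows "bipoly (\<lambda>a b x. g a b x + h a b x) N M"
proof -
  obtain c1 where c1: "\<forall>p r. cpoly_fun (c1 p r)"
    "\<forall>a b x. g a b x = (\<Sum>p\<le>N. \<Sum>r\<le>M. c1 p r x * a^p * b^r)"
    using assms(1) unfolding bipoly_def by blast
  obtain c2 where c2: "\<forall>p r. cpoly_fun (c2 p r)"
    "\<forall>a b x. h a b x = (\<Sum>p\<le>N. \<Sum>r\<le>M. c2 p r x * a^p * b^r)"
    using assms(2) unfolding bipoly_def by blast
  show ?thesis unfolding bipoly_def
    by (rule exI[of _ "\<lambda>p r x. c1 p r x + c2 p r x"])
       (use c1 c2 in \<open>auto intro: cpoly_fun.intros simp: distrib_right sum.distrib\<close>)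
qed

lemma bipoly_cmult:
  assumes "cpoly_fun k" "bipoly g N M" shows "bipoly (\<lambda>a b x. k x * g a b x) N M"
proof -
  obtain c1 where c1: "\<forall>p r. cpoly_fun (c1 p r)"
    "\<forall>a b x. g a b x = (\<Sum>p\<le>N. \<Sum>r\<le>M. c1 p r x * a^p * b^r)"
    using assms(2) unfolding bipoly_def by blast
  show ?thesis unfolding bipoly_def
    by (rule exI[of _ "\<lambda>p r x. k x * c1 p r x"])
       (use c1 assms(1) in \<open>auto intro: cpoly_fun.intros simp: sum_distrib_left mult.assoc\<close>)
qed

lemma bipoly_amult:
  assumes "bipoly g N M" shows "bipoly (\<lambda>a b x. a * g a b x) (Suc N) M"
proof -
  obtain c1 where c1: "\<forall>p r. cpoly_fun (c1 p r)"
    "\<forall>a b x. g a b x = (\<Sum>p\<le>N. \<Sum>r\<le>M. c1 p r x * a^p * b^r)"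
    using assms unfolding bipoly_def by blast
  define c' where "c' p r = (if p = 0 then (\<lambda>x. 0) else c1 (p - 1) r)" for p r
  have "cpoly_fun (c' p r)" for p r using c1(1) by (auto simp: c'_def intro: cpoly_fun.const)
  moreover have "a * g a b x = (\<Sum>p\<le>Suc N. \<Sum>r\<le>M. c' p r x * a^p * b^r)" for a b x
  proof -
    have "(\<Sum>p\<le>Suc N. \<Sum>r\<le>M. c' p r x * a^p * b^r) = (\<Sum>p\<le>N. \<Sum>r\<le>M. c1 p r x * a^(Suc p) * b^r)"
      unfolding sum.atMost_Suc_shift by (simp add: c'_def)
    note h = this
    have "a * g a b x = (\<Sum>p\<le>N. \<Sum>r\<le>M. a * (c1 p r x * a^p * b^r))"
      using c1(2) by (simp add: sum_distrib_left)
    also have "\<dots> = (\<Sum>p\<le>N. \<Sum>r\<le>M. c1 p r x * a^(Suc p) * b^(r))"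
      by (intro sum.cong refl) (simp add: mult_ac)
    finally show ?thesis using h by simp
  qed
  ultimately show ?thesis unfolding bipoly_def by blast
qed

lemma bipoly_bmult:
  assumes "bipoly g N M" shows "bipoly (\<lambda>a b x. b * g a b x) N (Suc M)"
proof -
  obtain c1 where c1: "\<forall>p r. cpoly_fun (c1 p r)"
    "\<forall>a b x. g a b x = (\<Sum>p\<le>N. \<Sum>r\<le>M. c1 p r x * a^p * b^r)"
    using assms unfolding bipoly_def by blast
  define c' where "c' p r = (if r = 0 then (\<lambda>x. 0) else c1 p (r - 1))" for p r
  have "cpoly_fun (c' p r)" for p r using c1(1) by (auto simp: c'_def intro: cpoly_fun.const)
  moreover have "b * g a b x = (\<Sum>p\<le>N. \<Sum>r\<le>Suc M. c' p r x * a^p * b^r)" for a b x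
  proof -
    have "(\<Sum>p\<le>N. \<Sum>r\<le>Suc M. c' p r x * a^p * b^r) = (\<Sum>p\<le>N. \<Sum>r\<le>M. c1 p r x * a^p * b^(Suc r))"
      unfolding sum.atMost_Suc_shift by (simp add: c'_def)
    note h = this
    have "b * g a b x = (\<Sum>p\<le>N. \<Sum>r\<le>M. b * (c1 p r x * a^p * b^r))"
      using c1(2) by (simp add: sum_distrib_left)
    also have "\<dots> = (\<Sum>p\<le>N. \<Sum>r\<le>M. c1 p r x * a^(p) * b^(Suc r))"
      by (intro sum.cong refl) (simp add: mult_ac)
    finally show ?thesis using h by simp
  qed
  ultimately show ?thesis unfolding bipoly_def by blast
qed

lemma bipoly_aprod:
  assumes "finite A" "\<forall>h\<in>A. cpoly_fun (\<alpha> h)" "bipoly g N M"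
  shows "bipoly (\<lambda>a b x. g a b x * (\<Prod>h\<in>A. a - \<alpha> h x)) (N + card A) M"
  using assms
proof (induction rule: finite_induct)
  case empty then show ?case by simp
next
  case (insert y F)
  then have IH: "bipoly (\<lambda>a b x. g a b x * (\<Prod>h\<in>F. a - \<alpha> h x)) (N + card F) M" by auto
  have ay: "cpoly_fun (\<lambda>x. - \<alpha> y x)"
    using insert(4) cpoly_fun.mult[OF cpoly_fun.const[of "-1"], of "\<alpha> y"] by simp
  have "bipoly (\<lambda>a b x. a * (g a b x * (\<Prod>h\<in>F. a - \<alpha> h x))
        + (- \<alpha> y x) * (g a b x * (\<Prod>h\<in>F. a - \<alpha> h x))) (Suc (N + card F)) M"
    by (rule bipoly_add[OF bipoly_amult[OF IH] bipoly_mono[OF bipoly_cmult[OF ay IH]]]) auto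
  note B = this
  have E: "N + card (insert y F) = Suc (N + card F)" using insert by simp
  show ?case
    unfolding E by (rule bipoly_cong[OF B]) (simp add: insert algebra_simps)
qed

lemma bipoly_bprod:
  assumes "finite A" "\<forall>k\<in>A. cpoly_fun (\<beta> k)" "bipoly g N M"
  shows "bipoly (\<lambda>a b x. g a b x * (\<Prod>k\<in>A. 1 - b * \<beta> k x)) N (M + card A)"
  using assms
proof (induction rule: finite_induct)
  case empty then show ?case by simp
next
  case (insert y F)
  then have IH: "bipoly (\<lambda>a b x. g a b x * (\<Prod>k\<in>F. 1 - b * \<beta> k x)) N (M + card F)" by auto
  have ay: "cpoly_fun (\<lambda>x. - \<beta> y x)"
    using insert(4) cpoly_fun.mult[OF cpoly_fun.const[of "-1"], of "\<beta> y"] by simp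
  have "bipoly (\<lambda>a b x. (- \<beta> y x) * (b * (g a b x * (\<Prod>k\<in>F. 1 - b * \<beta> k x)))
        + (g a b x * (\<Prod>k\<in>F. 1 - b * \<beta> k x))) N (Suc (M + card F))"
    by (rule bipoly_add[OF bipoly_cmult[OF ay bipoly_bmult[OF IH]] bipoly_mono[OF IH]]) auto
  note B = this
  have E: "M + card (insert y F) = Suc (M + card F)" using insert by simp
  show ?case
    unfolding E by (rule bipoly_cong[OF B]) (simp add: insert algebra_simps)
qed

lemma bipoly_sum:
  assumes "finite A" "\<forall>i\<in>A. bipoly (G i) N M"
  shows "bipoly (\<lambda>a b x. \<Sum>i\<in>A. G i a b x) N M"
  using assms
proof (induction rule: finite_induct)
  case empty
  show ?case using bipoly_mono[OF bipoly_const[OF cpoly_fun.const[of 0]], of N M] by simp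
next
  case (insert y F)
  then show ?case using bipoly_add[of "G y" N M "\<lambda>a b x. \<Sum>i\<in>F. G i a b x"] by simp
qed



lemma q_poly:
  fixes d f :: nat and e fi :: "nat \<Rightarrow> nat"
    and t u :: "nat \<Rightarrow> nat \<Rightarrow> complex^'n \<Rightarrow> complex"
  assumes "d \<ge> 1"
    and "\<forall>i\<in>{1..d}. fi i \<le> f"
    and "\<forall>i\<in>{1..d}. \<forall>j\<in>{1..e i}. cpoly_fun (t i j)"
    and "\<forall>i\<in>{1..d}. \<forall>k\<in>{1..fi i}. cpoly_fun (u i k)"
  shows "bipoly (q_explicit d e fi t u) (2*d-1) (f+1)"
proof -
  define S where "S a b x = (\<Sum>i=1..d. (\<Prod>h\<in>{1..d} - {i}. a - of_nat h) * (\<Prod>j=1..e i. t i j x)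
                 * (\<Prod>k=1..fi i. 1 - b * u i k x))" for a b x
  have Si: "bipoly (\<lambda>a b x. (\<Prod>h\<in>{1..d} - {i}. a - of_nat h) * (\<Prod>j=1..e i. t i j x)
                 * (\<Prod>k=1..fi i. 1 - b * u i k x)) (d-1) f" if i: "i \<in> {1..d}" for i
  proof -
    have T: "cpoly_fun (\<lambda>x. \<Prod>j=1..e i. t i j x)" by (rule cp_prod) (use assms(3) i in auto)
    have U: "bipoly (\<lambda>a b x. 1 * (\<Prod>k\<in>{1..fi i}. 1 - b * u i k x)) 0 (0 + card {1..fi i})"
      by (rule bipoly_bprod) (use assms(4) i in \<open>auto intro: bipoly_const cpoly_fun.const\<close>)
    have TU: "bipoly (\<lambda>a b x. (\<Prod>j=1..e i. t i j x) * (1 * (\<Prod>k\<in>{1..fi i}. 1 - b * u i k x))) 0 (fi i)"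
      using bipoly_cmult[OF T U] by simp
    have A: "bipoly (\<lambda>a b x. ((\<Prod>j=1..e i. t i j x) * (1 * (\<Prod>k\<in>{1..fi i}. 1 - b * u i k x)))
               * (\<Prod>h\<in>{1..d} - {i}. a - (\<lambda>x. of_nat h) x)) (0 + card ({1..d} - {i})) (fi i)"
      by (rule bipoly_aprod[OF _ _ TU]) (auto intro: cpoly_fun.const)
    have c: "card ({1..d} - {i}) = d - 1" using i by simp
    have A2: "bipoly (\<lambda>a b x. ((\<Prod>j=1..e i. t i j x) * (1 * (\<Prod>k\<in>{1..fi i}. 1 - b * u i k x)))
               * (\<Prod>h\<in>{1..d} - {i}. a - of_nat h)) (d-1) f"
      using bipoly_mono[OF A, of "d-1" f] c assms(2) i by simp
    show ?thesis by (rule bipoly_cong[OF A2]) (simp add: mult_ac)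
  qed
  have SB: "bipoly S (d-1) f"
    unfolding S_def[abs_def] by (rule bipoly_sum) (use Si in auto)
  have SP: "bipoly (\<lambda>a b x. S a b x * (\<Prod>h\<in>{1..d}. a - (\<lambda>x. of_nat h) x)) (d - 1 + card {1..d}) f"
    by (rule bipoly_aprod[OF _ _ SB]) (auto intro: cpoly_fun.const)
  have dd: "d - 1 + card {1..d} = 2*d-1" using assms(1) by simp
  have m1: "cpoly_fun (\<lambda>x. -1 :: complex)" by (rule cpoly_fun.const)
  have B1: "bipoly (\<lambda>a b x. (-1) * (b * (S a b x * (\<Prod>h\<in>{1..d}. a - of_nat h)))) (2*d-1) (f+1)"
    using bipoly_cmult[OF m1 bipoly_bmult[OF SP]] dd by simp
  have B2: "bipoly S (2*d-1) (f+1)" by (rule bipoly_mono[OF SB]) auto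
  show ?thesis
    by (rule bipoly_cong[OF bipoly_add[OF B2 B1]]) (simp add: q_explicit_def S_def algebra_simps)
qed

lemma q_equiv:
  fixes d :: nat and e fi :: "nat \<Rightarrow> nat"
    and t u :: "nat \<Rightarrow> nat \<Rightarrow> complex^'n \<Rightarrow> complex"
  shows "cnf_eval d e fi t u x \<longleftrightarrow> (\<forall>a. \<exists>b. q_explicit d e fi t u a b x = 0)"
proof
  assume cnf: "cnf_eval d e fi t u x"
  show "\<forall>a. \<exists>b. q_explicit d e fi t u a b x = 0"
  proof
    fix a :: complex
    show "\<exists>b. q_explicit d e fi t u a b x = 0"
    proof (cases "\<exists>i0\<in>{1..d}. a = of_nat i0")
      case True
      then obtain i0 where i0: "i0 \<in> {1..d}" "a = of_nat i0" by blast
      from cnf i0(1) have "(\<exists>j\<in>{1..e i0}. t i0 j x = 0) \<or> (\<exists>k\<in>{1..fi i0}. u i0 k x \<noteq> 0)"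
        unfolding cnf_eval_def by blast
      then obtain b where b: "(\<exists>j\<in>{1..e i0}. t i0 j x = 0) \<or> (\<exists>k\<in>{1..fi i0}. 1 - b * u i0 k x = 0)"
      proof (elim disjE)
        assume "\<exists>j\<in>{1..e i0}. t i0 j x = 0" then show ?thesis using that by blast
      next
        assume "\<exists>k\<in>{1..fi i0}. u i0 k x \<noteq> 0"
        then obtain k where k: "k \<in> {1..fi i0}" "u i0 k x \<noteq> 0" by blast
        then have "1 - (1 / u i0 k x) * u i0 k x = 0" by simp
        then show ?thesis using that k(1) by blast
      qed
      have "(\<Sum>i=1..d. (\<Prod>h\<in>{1..d} - {i}. a - of_nat h) * (\<Prod>j=1..e i. t i j x)
                 * (\<Prod>k=1..fi i. 1 - b * u i k x)) = 0"
      proof (rule sum.neutral, intro ballI)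
        fix i assume i: "i \<in> {1..d}"
        show "(\<Prod>h\<in>{1..d} - {i}. a - of_nat h) * (\<Prod>j=1..e i. t i j x)
                 * (\<Prod>k=1..fi i. 1 - b * u i k x) = 0"
        proof (cases "i = i0")
          case True
          then show ?thesis using b by auto
        next
          case False
          then have "(\<Prod>h\<in>{1..d} - {i}. a - of_nat h) = 0" using i0 by (auto simp: prod_zero_iff)
          then show ?thesis by simp
        qed
      qed
      then show ?thesis unfolding q_explicit_def by auto
    next
      case False
      then have P: "(\<Prod>i=1..d. a - of_nat i) \<noteq> 0" by (auto simp: prod_zero_iff)
      show ?thesis
        by (rule exI[of _ "1 / (\<Prod>i=1..d. a - of_nat i)"]) (use P in \<open>simp add: q_explicit_def\<close>)
    qed
  qed
next
  assume H: "\<forall>a. \<exists>b. q_explicit d e fi t u a b x = 0"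
  show "cnf_eval d e fi t u x"
    unfolding cnf_eval_def
  proof (rule ccontr)
    assume "\<not> (\<forall>i\<in>{1..d}. (\<exists>j\<in>{1..e i}. t i j x = 0) \<or> (\<exists>k\<in>{1..fi i}. u i k x \<noteq> 0))"
    then obtain i0 where i0: "i0 \<in> {1..d}" "\<forall>j\<in>{1..e i0}. t i0 j x \<noteq> 0" "\<forall>k\<in>{1..fi i0}. u i0 k x = 0"
      by blast
    define a :: complex where "a = of_nat i0"
    obtain b where b: "q_explicit d e fi t u a b x = 0" using H by blast
    define F where "F i = (\<Prod>h\<in>{1..d} - {i}. a - of_nat h) * (\<Prod>j=1..e i. t i j x)
                 * (\<Prod>k=1..fi i. 1 - b * u i k x)" for i
    have P: "(\<Prod>i=1..d. a - of_nat i) = 0" using i0(1) by (auto simp: prod_zero_iff a_def)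
    have "(\<Sum>i=1..d. F i) = F i0 + (\<Sum>i\<in>{1..d} - {i0}. F i)"
      using i0(1) by (simp add: sum.remove)
    also have "(\<Sum>i\<in>{1..d} - {i0}. F i) = 0"
    proof (rule sum.neutral, intro ballI)
      fix i assume i: "i \<in> {1..d} - {i0}"
      then have "(\<Prod>h\<in>{1..d} - {i}. a - of_nat h) = 0" using i0 by (auto simp: prod_zero_iff a_def)
      then show "F i = 0" by (simp add: F_def)
    qed
    finally have "q_explicit d e fi t u a b x = F i0"
      using P by (simp add: q_explicit_def F_def)
    moreover have "F i0 \<noteq> 0"
    proof -
      have "(\<Prod>h\<in>{1..d} - {i0}. a - of_nat h) \<noteq> 0" by (auto simp: prod_zero_iff a_def)
      moreover have "(\<Prod>j=1..e i0. t i0 j x) \<noteq> 0" using i0(2) by (simp add: prod_zero_iff)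
      moreover have "(\<Prod>k=1..fi i0. 1 - b * u i0 k x) = 1" using i0(3) by simp
      ultimately show ?thesis by (simp add: F_def)
    qed
    ultimately show False using b by simp
  qed
qed

theorem theorem5p1:
  fixes d f :: nat and e fi :: "nat \<Rightarrow> nat"
    and t u :: "nat \<Rightarrow> nat \<Rightarrow> complex^'n \<Rightarrow> complex"
  assumes "d \<ge> 1"
    and "\<forall>i\<in>{1..d}. fi i \<le> f"
    and "\<forall>i\<in>{1..d}. \<forall>j\<in>{1..e i}. cpoly_fun (t i j)"
    and "\<forall>i\<in>{1..d}. \<forall>k\<in>{1..fi i}. cpoly_fun (u i k)"
  shows "\<exists>c :: nat \<Rightarrow> nat \<Rightarrow> complex^'n \<Rightarrow> complex.
           (\<forall>p r. cpoly_fun (c p r)) \<and>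
           (\<forall>a b x. q_explicit d e fi t u a b x
                      = (\<Sum>p\<le>2*d-1. \<Sum>r\<le>f+1. c p r x * a ^ p * b ^ r)) \<and>
           (\<forall>x. cnf_eval d e fi t u x \<longleftrightarrow>
                  (\<forall>a. \<exists>b. q_explicit d e fi t u a b x = 0))"
  using q_poly[OF assms] q_equiv unfolding bipoly_def by blast

end
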